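(* Let $L>0$ and let $a,c\in C^1_{\mathrm{pw}}[-L,L]$ with $a_{\min}\le a\le a_{\max}$, $c_{\min}\le c\le c_{\max}$, $a_{\min},c_{\min}>0$, and let $-L=z_0<\dots<z_N=L$ be a partition such that on each $\tau_j=(z_{j-1},z_j)$, $a,c\in C^1[z_{j-1},z_j]$ and each of $a',c'$ is either $>0$ throughout $\tau_j$ or $\le0$ throughout $\tau_j$. Define $\tilde a$ on $\tau_j$ by $\tilde a=a$ if $a'>0$ on $\tau_j$ and $\tilde a\equiv a^+(z_{j-1})$ if $a'\le0$ on $\tau_j$, and $\tilde c$ analogously from $c$. For $j=1,\dots,N-1$ let $$\alpha_j=\max\Big\{\frac{\tilde a^-(z_j)}{\tilde a^+(z_j)},1\Big\},\quad \sigma_j=\max\Big\{\frac{(\tilde c^2)^-(z_j)}{(\tilde c^2)^+(z_j)},1\Big\},\quad \gamma_j=\max\Big\{\frac{a^+(z_j)}{a^-(z_j)},\frac{(c^2)^+(z_j)}{(c^2)^-(z_j)},1\Big\}.$$ Define $A_1=0$ and $A_{j+1}=\alpha_j\sigma_j\gamma_j\big(\int_{\tau_j}\frac{1}{\tilde a\,\tilde c^2}+A_j\big)$ for $j=1,\dots,N-1$, and $$q(x)=\tilde a(x)\tilde c^2(x)\Big(\int_{z_{j-1}}^x\frac{ds}{\tilde a(s)\tilde c^2(s)}+A_j\Big),\qquad x\in\tau_j,\ 1\le j\le N.$$ Then $q$ is increasing on $[-L,L]$, $q(-L)=0$, and for each $j=1,\dots,N$, $$\partial_{\mathrm{pw}}\Big(\frac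 qa\Big)(x)\ge\frac1{a(x)},\qquad\partial_{\mathrm{pw}}\Big(\frac q{c^2}\Big)(x)\ge\frac1{c^2(x)},\qquad x\in\tau_j,$$ and $[q/a]_{z_j}\le0$, $[q/c^2]_{z_j}\le0$ for $j=1,\dots,N-1$.
   Context: $C^1_{\mathrm{pw}}[-L,L]$ is the set of $g:[-L,L]\to\mathbb{R}$ for which there is a finite partition $-L=z_0<\dots<z_N=L$ with $g\in C^1[z_{j-1},z_j]$ for each $j$ and, on each $(z_{j-1},z_j)$, either $g'>0$ throughout or $g'\le0$ throughout. For the partition, $g^+(z_j)$, $g^-(z_j)$ are the right and left one-sided limits, $[g]_{z_j}=g^-(z_j)-g^+(z_j)$ for interior points, and $\partial_{\mathrm{pw}}g=g'$ on each open subinterval. $q(-L)$ means the limit from the right. *)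

theory Defs
  imports "HOL-Analysis.Analysis"
begin

text \<open>One-sided limits g^+(x) (from the right) and g^-(x) (from the left).\<close>
definition rlim :: "(real \<Rightarrow> real) \<Rightarrow> real \<Rightarrow> real" where
  "rlim g x = Lim (at_right x) g"

definition llim :: "(real \<Rightarrow> real) \<Rightarrow> real \<Rightarrow> real" where
  "llim g x = Lim (at_left x) g"

definition tau :: "(nat \<Rightarrow> real) \<Rightarrow> nat \<Rightarrow> real set" where
  "tau z j = {z (j - 1) <..< z j}"

text \<open>g is C^1 on the closed interval [z_{j-1}, z_j] (after redefining it at the
  endpoints by its one-sided limits), and g' > 0 throughout tau_j or g' \<le> 0 throughout tau_j.\<close>
definition C1_piece :: "(real \<Rightarrow> real) \<Rightarrow> real \<Rightarrow> real \<Rightarrow> bool" where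
  "C1_piece g s t \<longleftrightarrow>
     (\<exists>h h'. (\<forall>x\<in>{s..t}. (h has_real_derivative h' x) (at x within {s..t}))
            \<and> continuous_on {s..t} h' \<and> (\<forall>x\<in>{s<..<t}. g x = h x))"

definition sign_piece :: "(real \<Rightarrow> real) \<Rightarrow> real \<Rightarrow> real \<Rightarrow> bool" where
  "sign_piece g s t \<longleftrightarrow> (\<forall>x\<in>{s<..<t}. deriv g x > 0) \<or> (\<forall>x\<in>{s<..<t}. deriv g x \<le> 0)"

definition piece :: "(nat \<Rightarrow> real) \<Rightarrow> nat \<Rightarrow> real \<Rightarrow> nat" where
  "piece z N x = (THE j. j \<in> {1..N} \<and> x \<in> tau z j)"

definition tilde :: "(real \<Rightarrow> real) \<Rightarrow> (nat \<Rightarrow> real) \<Rightarrow> nat \<Rightarrow> real \<Rightarrow> real" where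
  "tilde g z N x = (let j = piece z N x in
      if (\<forall>y\<in>tau z j. deriv g y > 0) then g x else rlim g (z (j - 1)))"

definition alpha_c :: "(real \<Rightarrow> real) \<Rightarrow> (nat \<Rightarrow> real) \<Rightarrow> nat \<Rightarrow> nat \<Rightarrow> real" where
  "alpha_c a z N j = max (llim (tilde a z N) (z j) / rlim (tilde a z N) (z j)) 1"

definition sigma_c :: "(real \<Rightarrow> real) \<Rightarrow> (nat \<Rightarrow> real) \<Rightarrow> nat \<Rightarrow> nat \<Rightarrow> real" where
  "sigma_c c z N j = max (llim (\<lambda>x. (tilde c z N x)\<^sup>2) (z j) / rlim (\<lambda>x. (tilde c z N x)\<^sup>2) (z j)) 1"

definition gamma_c :: "(real \<Rightarrow> real) \<Rightarrow> (real \<Rightarrow> real) \<Rightarrow> (nat \<Rightarrow> real) \<Rightarrow> nat \<Rightarrow> real" where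
  "gamma_c a c z j = max (max (rlim a (z j) / llim a (z j))
                              (rlim (\<lambda>x. (c x)\<^sup>2) (z j) / llim (\<lambda>x. (c x)\<^sup>2) (z j))) 1"

definition Iac :: "(real \<Rightarrow> real) \<Rightarrow> (real \<Rightarrow> real) \<Rightarrow> (nat \<Rightarrow> real) \<Rightarrow> nat \<Rightarrow> real \<Rightarrow> real \<Rightarrow> real" where
  "Iac a c z N s t = integral {s..t} (\<lambda>y. 1 / (tilde a z N y * (tilde c z N y)\<^sup>2))"

text \<open>Aseq a c z N k = A_{k+1}: A_1 = 0, A_{j+1} = alpha_j sigma_j gamma_j (int_{tau_j} ... + A_j).\<close>
primrec Aseq :: "(real \<Rightarrow> real) \<Rightarrow> (real \<Rightarrow> real) \<Rightarrow> (nat \<Rightarrow> real) \<Rightarrow> nat \<Rightarrow> nat \<Rightarrow> real" where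
  "Aseq a c z N 0 = 0"
| "Aseq a c z N (Suc k) =
     alpha_c a z N (Suc k) * sigma_c c z N (Suc k) * gamma_c a c z (Suc k)
       * (Iac a c z N (z k) (z (Suc k)) + Aseq a c z N k)"

definition Acoef :: "(real \<Rightarrow> real) \<Rightarrow> (real \<Rightarrow> real) \<Rightarrow> (nat \<Rightarrow> real) \<Rightarrow> nat \<Rightarrow> nat \<Rightarrow> real" where
  "Acoef a c z N j = Aseq a c z N (j - 1)"

definition qfun :: "(real \<Rightarrow> real) \<Rightarrow> (real \<Rightarrow> real) \<Rightarrow> (nat \<Rightarrow> real) \<Rightarrow> nat \<Rightarrow> real \<Rightarrow> real" where
  "qfun a c z N x = (let j = piece z N x in
      tilde a z N x * (tilde c z N x)\<^sup>2 * (Iac a c z N (z (j - 1)) x + Acoef a c z N j))"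

end

theory Submission
  imports Defs
begin


lemma z_mono:
  fixes z :: "nat \<Rightarrow> real" and N i j :: nat
  assumes zinc: "\<forall>j\<in>{1..N}. z (j - 1) < (z j::real)"
    and ij: "i \<le> j" and jN: "j \<le> N"
  shows "z i \<le> z j"
  using ij jN
proof (induction j)
  case 0 then show ?case by simp
next
  case (Suc j)
  have "z j < z (Suc j)" using zinc Suc.prems by (metis atLeastAtMost_iff diff_Suc_1 le_add1 plus_1_eq_Suc)
  then show ?case using Suc by (cases "i = Suc j") auto
qed

lemma z_strict:
  fixes z :: "nat \<Rightarrow> real" and N i j :: nat
  assumes zinc: "\<forall>j\<in>{1..N}. z (j - 1) < (z j::real)"
  shows "i < j \<Longrightarrow> j \<le> N \<Longrightarrow> z i < z j"
proof -
  assume "i < j" "j \<le> N"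
  then have "z i \<le> z (j - 1)" by (intro z_mono[OF zinc]) auto
  also have "\<dots> < z j" using zinc \<open>i<j\<close> \<open>j\<le>N\<close> by auto
  finally show ?thesis .
qed

lemma piece_eq:
  fixes z :: "nat \<Rightarrow> real" and N j :: nat
  assumes zinc: "\<forall>j\<in>{1..N}. z (j - 1) < (z j::real)"
    and j: "j \<in> {1..N}" and x: "x \<in> tau z j"
  shows "piece z N x = j"
  unfolding piece_def
proof (rule the_equality)
  show "j \<in> {1..N} \<and> x \<in> tau z j" using j x by simp
next
  fix i assume i: "i \<in> {1..N} \<and> x \<in> tau z i"
  show "i = j"
  proof (rule ccontr)
    assume "i \<noteq> j"
    then consider "i < j" | "j < i" by linarith
    then show False
    proof cases
      case 1
      then have "z i \<le> z (j - 1)" using j by (intro z_mono[OF zinc]) auto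
      then show False using i x by (auto simp: tau_def)
    next
      case 2
      then have "z j \<le> z (i - 1)" using i by (intro z_mono[OF zinc]) auto
      then show False using i x by (auto simp: tau_def)
    qed
  qed
qed

lemma lim_right_piece:
  fixes f g :: "real \<Rightarrow> real"
  assumes "s < t" "continuous_on {s..t} f" "\<forall>x\<in>{s<..<t}. g x = f x"
  shows "(g \<longlongrightarrow> f s) (at_right s)"
proof -
  have "(f \<longlongrightarrow> f s) (at s within {s..t})"
    using assms(1,2) by (simp add: continuous_on_eq_continuous_within continuous_within)
  then have "(f \<longlongrightarrow> f s) (at_right s)" using at_within_Icc_at_right[OF assms(1)] by simp
  moreover have "eventually (\<lambda>x. f x = g x) (at_right s)"
    unfolding eventually_at_right_field using assms by (intro exI[of _ t]) auto
  ultimately show ?thesis by (rule Lim_transform_eventually)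
qed

lemma lim_left_piece:
  fixes f g :: "real \<Rightarrow> real"
  assumes "s < t" "continuous_on {s..t} f" "\<forall>x\<in>{s<..<t}. g x = f x"
  shows "(g \<longlongrightarrow> f t) (at_left t)"
proof -
  have "(f \<longlongrightarrow> f t) (at t within {s..t})"
    using assms(1,2) by (simp add: continuous_on_eq_continuous_within continuous_within)
  then have "(f \<longlongrightarrow> f t) (at_left t)" using at_within_Icc_at_left[OF assms(1)] by simp
  moreover have "eventually (\<lambda>x. f x = g x) (at_left t)"
    unfolding eventually_at_left_field using assms by (intro exI[of _ s]) auto
  ultimately show ?thesis by (rule Lim_transform_eventually)
qed

lemma ge_closed:
  fixes f :: "real \<Rightarrow> real"
  assumes "s < t" "continuous_on {s..t} f" "\<forall>x\<in>{s<..<t}. m \<le> f x" "x \<in> {s..t}"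
  shows "m \<le> f x"
  using continuous_ge_on_closure[of "{s<..<t}" f x m] assms closure_greaterThanLessThan[OF assms(1)]
  by auto

locale pwf =
  fixes g :: "real \<Rightarrow> real" and z :: "nat \<Rightarrow> real" and N :: nat and gmin L :: real
  assumes gpos: "gmin > 0" and gbnd: "\<forall>x\<in>{-L..L}. gmin \<le> g x"
    and z0: "z 0 = -L" and zN: "z N = L"
    and zinc: "\<forall>j\<in>{1..N}. z (j - 1) < z j"
    and gC1: "\<forall>j\<in>{1..N}. C1_piece g (z (j - 1)) (z j) \<and> sign_piece g (z (j - 1)) (z j)"
begin

definition PP where "PP j h h' \<longleftrightarrow>
  (\<forall>x\<in>{z (j - 1)..z j}. (h has_real_derivative h' x) (at x within {z (j - 1)..z j}))
  \<and> continuous_on {z (j - 1)..z j} h' \<and> (\<forall>x\<in>{z (j - 1)<..<z j}. g x = h x)"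

definition hh where "hh j = (SOME h. \<exists>h'. PP j h h')"
definition hd where "hd j = (SOME h'. PP j (hh j) h')"

lemma PP_hh: assumes "j \<in> {1..N}" shows "PP j (hh j) (hd j)"
proof -
  have "\<exists>h h'. PP j h h'" using gC1 assms unfolding C1_piece_def PP_def by blast
  then have "\<exists>h'. PP j (hh j) h'" unfolding hh_def by (rule someI_ex)
  then show ?thesis unfolding hd_def by (rule someI_ex)
qed

lemma st: assumes "j \<in> {1..N}" shows "z (j - 1) < z j"
  using zinc assms by blast

lemma in_L: assumes "j \<in> {1..N}" "x \<in> {z (j - 1)..z j}" shows "x \<in> {-L..L}"
proof -
  have "z 0 \<le> z (j - 1)" "z j \<le> z N" using assms(1) by (auto intro!: z_mono[OF zinc])
  then show ?thesis using assms z0 zN by auto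
qed

lemma g_eq: assumes "j \<in> {1..N}" "x \<in> tau z j" shows "g x = hh j x"
  using PP_hh[OF assms(1)] assms(2) unfolding PP_def tau_def by blast

lemma hh_cont: assumes "j \<in> {1..N}" shows "continuous_on {z (j - 1)..z j} (hh j)"
  using PP_hh[OF assms(1)] unfolding PP_def by (intro DERIV_continuous_on) blast

lemma hh_der: assumes "j \<in> {1..N}" "x \<in> tau z j" shows "(hh j has_real_derivative hd j x) (at x)"
proof -
  have "(hh j has_real_derivative hd j x) (at x within {z (j - 1)..z j})"
    using PP_hh[OF assms(1)] assms(2) unfolding PP_def tau_def by auto
  then show ?thesis using at_within_Icc_at[of "z (j - 1)" x "z j"] assms(2) by (simp add: tau_def)
qed

lemma g_der: assumes "j \<in> {1..N}" "x \<in> tau z j" shows "(g has_real_derivative hd j x) (at x)"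
  by (rule has_field_derivative_transform_within_open[OF hh_der[OF assms] _ assms(2)])
     (auto simp: tau_def g_eq[OF assms(1)])

lemma deriv_g: assumes "j \<in> {1..N}" "x \<in> tau z j" shows "deriv g x = hd j x"
  using g_der[OF assms] by (rule DERIV_imp_deriv)

lemma hh_lb: assumes "j \<in> {1..N}" "x \<in> {z (j - 1)..z j}" shows "gmin \<le> hh j x"
proof (rule ge_closed[OF st[OF assms(1)] hh_cont[OF assms(1)] _ assms(2)])
  show "\<forall>x\<in>{z (j - 1)<..<z j}. gmin \<le> hh j x"
  proof
    fix y assume y: "y \<in> {z (j - 1)<..<z j}"
    then have "y \<in> {-L..L}" using in_L[OF assms(1), of y] by auto
    then have "gmin \<le> g y" using gbnd by blast
    then show "gmin \<le> hh j y" using g_eq[OF assms(1), of y] y by (auto simp: tau_def)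
  qed
qed

definition inc where "inc j \<longleftrightarrow> (\<forall>y\<in>tau z j. deriv g y > 0)"
definition TG where "TG j x = (if inc j then hh j x else hh j (z (j - 1)))"
definition TGd where "TGd j x = (if inc j then hd j x else 0)"

lemma TG_cont: assumes "j \<in> {1..N}" shows "continuous_on {z (j - 1)..z j} (TG j)"
  using hh_cont[OF assms] unfolding TG_def by (cases "inc j") auto

lemma TG_lb: assumes "j \<in> {1..N}" "x \<in> {z (j - 1)..z j}" shows "gmin \<le> TG j x"
  using hh_lb[OF assms] hh_lb[OF assms(1), of "z (j - 1)"] st[OF assms(1)] unfolding TG_def by auto

lemma TG_der: assumes "j \<in> {1..N}" "x \<in> tau z j" shows "(TG j has_real_derivative TGd j x) (at x)"
  using hh_der[OF assms] unfolding TG_def TGd_def by (cases "inc j") auto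

lemma TGd_nonneg: assumes "j \<in> {1..N}" "x \<in> tau z j" shows "0 \<le> TGd j x"
  using deriv_g[OF assms] assms(2) unfolding TGd_def inc_def by (cases "inc j") (auto simp: inc_def)

lemma not_inc: assumes "j \<in> {1..N}" "\<not> inc j" "x \<in> tau z j" shows "hd j x \<le> 0"
proof -
  have "sign_piece g (z (j - 1)) (z j)" using gC1 assms(1) by blast
  then have "\<forall>y\<in>tau z j. deriv g y \<le> 0" using assms(2) unfolding sign_piece_def inc_def tau_def by blast
  then show ?thesis using deriv_g[OF assms(1,3)] assms(3) by auto
qed

lemma g_right: assumes "j \<in> {1..N}" shows "(g \<longlongrightarrow> hh j (z (j - 1))) (at_right (z (j - 1)))"
  using lim_right_piece[OF st[OF assms] hh_cont[OF assms]] g_eq[OF assms] by (auto simp: tau_def)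

lemma g_left: assumes "j \<in> {1..N}" shows "(g \<longlongrightarrow> hh j (z j)) (at_left (z j))"
  using lim_left_piece[OF st[OF assms] hh_cont[OF assms]] g_eq[OF assms] by (auto simp: tau_def)

lemma rlim_g: assumes "j \<in> {1..N}" shows "rlim g (z (j - 1)) = hh j (z (j - 1))"
  unfolding rlim_def using g_right[OF assms] by (intro tendsto_Lim) (auto simp: trivial_limit_at_right_real)

lemma llim_g: assumes "j \<in> {1..N}" shows "llim g (z j) = hh j (z j)"
  unfolding llim_def using g_left[OF assms] by (intro tendsto_Lim) (auto simp: trivial_limit_at_left_real)

lemma tilde_eq: assumes "j \<in> {1..N}" "x \<in> tau z j" shows "tilde g z N x = TG j x"
  unfolding tilde_def Let_def piece_eq[OF zinc assms] TG_def inc_def rlim_g[OF assms(1)]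
  using g_eq[OF assms] by simp

lemma tilde_right: assumes "j \<in> {1..N}" shows "(tilde g z N \<longlongrightarrow> TG j (z (j - 1))) (at_right (z (j - 1)))"
  using lim_right_piece[OF st[OF assms] TG_cont[OF assms]] tilde_eq[OF assms] by (auto simp: tau_def)

lemma tilde_left: assumes "j \<in> {1..N}" shows "(tilde g z N \<longlongrightarrow> TG j (z j)) (at_left (z j))"
  using lim_left_piece[OF st[OF assms] TG_cont[OF assms]] tilde_eq[OF assms] by (auto simp: tau_def)

end




lemma quot_der:
  fixes Q H :: "real \<Rightarrow> real"
  assumes "(Q has_real_derivative Qd) (at x)" "(H has_real_derivative Hd) (at x)"
    "H x > 0" "Qd * H x - Q x * Hd \<ge> H x"
  shows "\<exists>D. ((\<lambda>y. Q y / H y) has_real_derivative D) (at x) \<and> D \<ge> 1 / H x"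
proof (intro exI conjI)
  show "((\<lambda>y. Q y / H y) has_real_derivative (Qd * H x - Q x * Hd) / (H x * H x)) (at x)"
    using DERIV_divide[OF assms(1,2)] assms(3) by simp
  have "1 / H x = H x / (H x * H x)" using assms(3) by simp
  also have "\<dots> \<le> (Qd * H x - Q x * Hd) / (H x * H x)"
    using assms(3,4) by (intro divide_right_mono) auto
  finally show "1 / H x \<le> (Qd * H x - Q x * Hd) / (H x * H x)" .
qed

lemma key_ineq:
  fixes F Fd C Cd H Hd S :: real
  assumes "(Fd * C^2 + 2 * F * C * Cd) * H - F * C^2 * Hd \<ge> 0" "S \<ge> 0"
  shows "((Fd * C^2 + 2 * F * C * Cd) * S + 1) * H - F * C^2 * S * Hd \<ge> H"
proof -
  have "((Fd * C^2 + 2 * F * C * Cd) * S + 1) * H - F * C^2 * S * Hd - H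
      = ((Fd * C^2 + 2 * F * C * Cd) * H - F * C^2 * Hd) * S" by algebra
  moreover have "((Fd * C^2 + 2 * F * C * Cd) * H - F * C^2 * Hd) * S \<ge> 0"
    using assms by simp
  ultimately show ?thesis by linarith
qed

lemma jump_ineq:
  fixes u u' v v' p p' w w' S :: real
  assumes pos: "u > 0" "u' > 0" "v > 0" "v' > 0" "p > 0" "p' > 0" "w > 0" "w' > 0" "S \<ge> 0"
  defines "R \<equiv> u' * v' * (max (u / u') 1 * max (v / v') 1 * max (max (p' / p) (w' / w)) 1 * S)"
  shows "u * v * S \<le> R" "u * v * S / p \<le> R / p'" "u * v * S / w \<le> R / w'"
proof -
  define \<alpha> where "\<alpha> = max (u / u') 1"
  define \<sigma> where "\<sigma> = max (v / v') 1"
  define \<gamma> where "\<gamma> = max (max (p' / p) (w' / w)) 1"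
  have a1: "u \<le> u' * \<alpha>" using pos unfolding \<alpha>_def by (auto simp: field_simps max_def)
  have s1: "v \<le> v' * \<sigma>" using pos unfolding \<sigma>_def by (auto simp: field_simps max_def)
  have g1: "1 \<le> \<gamma>" "p' / p \<le> \<gamma>" "w' / w \<le> \<gamma>" unfolding \<gamma>_def by auto
  have R: "R = ((u' * \<alpha>) * (v' * \<sigma>) * S) * \<gamma>" unfolding R_def \<alpha>_def \<sigma>_def \<gamma>_def by (simp add: ac_simps)
  have uv: "u * v \<le> (u' * \<alpha>) * (v' * \<sigma>)" using a1 s1 pos by (intro mult_mono) auto
  have uvS: "u * v * S \<le> (u' * \<alpha>) * (v' * \<sigma>) * S" using uv pos(9) by (rule mult_right_mono)
  have "0 \<le> u * v * S" using pos by simp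
  then have nn: "0 \<le> (u' * \<alpha>) * (v' * \<sigma>) * S" using uvS by linarith
  have "(u' * \<alpha>) * (v' * \<sigma>) * S \<le> ((u' * \<alpha>) * (v' * \<sigma>) * S) * \<gamma>"
    using mult_left_mono[OF g1(1) nn] by simp
  then show "u * v * S \<le> R" unfolding R using uvS by linarith
  have "u * v * S / p = (u * v * S) * (p' / p) / p'" using pos by (simp add: field_simps)
  also have "\<dots> \<le> ((u' * \<alpha>) * (v' * \<sigma>) * S) * \<gamma> / p'"
  proof (rule divide_right_mono)
    show "u * v * S * (p' / p) \<le> u' * \<alpha> * (v' * \<sigma>) * S * \<gamma>"
      by (rule mult_mono[OF uvS g1(2) nn]) (use pos in simp)
  qed (use pos in simp)
  also have "\<dots> = R / p'" unfolding R ..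
  finally show "u * v * S / p \<le> R / p'" .
  have "u * v * S / w = (u * v * S) * (w' / w) / w'" using pos by (simp add: field_simps)
  also have "\<dots> \<le> ((u' * \<alpha>) * (v' * \<sigma>) * S) * \<gamma> / w'"
  proof (rule divide_right_mono)
    show "u * v * S * (w' / w) \<le> u' * \<alpha> * (v' * \<sigma>) * S * \<gamma>"
      by (rule mult_mono[OF uvS g1(3) nn]) (use pos in simp)
  qed (use pos in simp)
  also have "\<dots> = R / w'" unfolding R ..
  finally show "u * v * S / w \<le> R / w'" .
qed




locale two = A: pwf a z N amin L + C: pwf c z N cmin L
  for a c :: "real \<Rightarrow> real" and z N amin cmin L
begin

definition gi where "gi j y = 1 / (A.TG j y * (C.TG j y)\<^sup>2)"
definition G where "G j x = integral {z (j - 1)..x} (gi j)"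
definition AA where "AA j = Acoef a c z N j"
definition Q where "Q j x = A.TG j x * (C.TG j x)\<^sup>2 * (G j x + AA j)"
definition Qd where "Qd j x = (A.TGd j x * (C.TG j x)\<^sup>2 + 2 * A.TG j x * C.TG j x * C.TGd j x) * (G j x + AA j) + 1"

lemma F_pos: "j \<in> {1..N} \<Longrightarrow> x \<in> {z (j - 1)..z j} \<Longrightarrow> A.TG j x > 0"
  using A.TG_lb A.gpos by fastforce
lemma C_pos: "j \<in> {1..N} \<Longrightarrow> x \<in> {z (j - 1)..z j} \<Longrightarrow> C.TG j x > 0"
  using C.TG_lb C.gpos by fastforce

lemma gi_cont: assumes "j \<in> {1..N}" shows "continuous_on {z (j - 1)..z j} (gi j)"
proof -
  have "\<forall>y\<in>{z (j - 1)..z j}. A.TG j y * (C.TG j y)\<^sup>2 \<noteq> 0"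
    using F_pos[OF assms] C_pos[OF assms] by (metis mult_eq_0_iff not_less_iff_gr_or_eq power_eq_0_iff)
  then show ?thesis
    unfolding gi_def[abs_def] using A.TG_cont[OF assms] C.TG_cont[OF assms]
    by (intro continuous_intros) auto
qed

lemma gi_pos: assumes "j \<in> {1..N}" "x \<in> {z (j - 1)..z j}" shows "gi j x > 0"
proof -
  have "A.TG j x > 0" "C.TG j x > 0" using F_pos[OF assms] C_pos[OF assms] by auto
  then show ?thesis unfolding gi_def by simp
qed

lemma G_der_within: assumes "j \<in> {1..N}" "x \<in> {z (j - 1)..z j}"
  shows "(G j has_real_derivative gi j x) (at x within {z (j - 1)..z j})"
  unfolding G_def[abs_def] by (rule integral_has_real_derivative[OF gi_cont[OF assms(1)] assms(2)])

lemma G_der: assumes "j \<in> {1..N}" "x \<in> tau z j"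
  shows "(G j has_real_derivative gi j x) (at x)"
  using G_der_within[OF assms(1), of x] assms(2) at_within_Icc_at[of "z (j - 1)" x "z j"]
  by (auto simp: tau_def)

lemma G_cont: assumes "j \<in> {1..N}" shows "continuous_on {z (j - 1)..z j} (G j)"
  using G_der_within[OF assms] by (intro DERIV_continuous_on) blast

lemma G_nonneg: assumes "j \<in> {1..N}" "x \<in> {z (j - 1)..z j}" shows "G j x \<ge> 0"
  unfolding G_def
proof (rule integral_nonneg)
  show "gi j integrable_on {z (j - 1)..x}"
    using assms by (intro integrable_continuous_interval continuous_on_subset[OF gi_cont[OF assms(1)]]) auto
  show "\<And>y. y \<in> {z (j - 1)..x} \<Longrightarrow> 0 \<le> gi j y"
    using gi_pos[OF assms(1)] assms(2) by (meson atLeastAtMost_iff less_imp_le order_trans)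
qed

lemma G_0: "G j (z (j - 1)) = 0"
  unfolding G_def by simp

lemma Iac_eq: assumes "j \<in> {1..N}" "x \<in> {z (j - 1)<..z j}"
  shows "Iac a c z N (z (j - 1)) x = G j x"
proof -
  have "Iac a c z N (z (j - 1)) x = integral {z (j - 1)<..<x} (\<lambda>y. 1 / (tilde a z N y * (tilde c z N y)\<^sup>2))"
    unfolding Iac_def by (rule integral_open_interval_real)
  also have "\<dots> = integral {z (j - 1)<..<x} (gi j)"
  proof (rule integral_cong)
    fix y assume "y \<in> {z (j - 1)<..<x}"
    then have "y \<in> tau z j" using assms(2) by (auto simp: tau_def)
    then show "1 / (tilde a z N y * (tilde c z N y)\<^sup>2) = gi j y"
      unfolding gi_def using A.tilde_eq[OF assms(1)] C.tilde_eq[OF assms(1)] by simp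
  qed
  also have "\<dots> = G j x" unfolding G_def by (rule integral_open_interval_real[symmetric])
  finally show ?thesis .
qed

lemma q_eq: assumes "j \<in> {1..N}" "x \<in> tau z j" shows "qfun a c z N x = Q j x"
  unfolding qfun_def Let_def piece_eq[OF A.zinc assms] Q_def AA_def
  using A.tilde_eq[OF assms] C.tilde_eq[OF assms] Iac_eq[OF assms(1), of x] assms(2)
  by (simp add: tau_def)

lemma Aseq_nonneg: "k < N \<Longrightarrow> Aseq a c z N k \<ge> 0"
proof (induction k)
  case 0 then show ?case by simp
next
  case (Suc k)
  have j: "Suc k \<in> {1..N}" using Suc.prems by simp
  have "Iac a c z N (z k) (z (Suc k)) = G (Suc k) (z (Suc k))"
    using Iac_eq[OF j, of "z (Suc k)"] A.st[OF j] by simp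
  moreover have "G (Suc k) (z (Suc k)) \<ge> 0" using G_nonneg[OF j] A.st[OF j] by simp
  moreover have "alpha_c a z N (Suc k) \<ge> 0" "sigma_c c z N (Suc k) \<ge> 0" "gamma_c a c z (Suc k) \<ge> 0"
    unfolding alpha_c_def sigma_c_def gamma_c_def by auto
  ultimately show ?case using Suc by simp
qed

lemma AA_nonneg: "j \<in> {1..N} \<Longrightarrow> AA j \<ge> 0"
  unfolding AA_def Acoef_def by (rule Aseq_nonneg) auto

lemma Q_der: assumes "j \<in> {1..N}" "x \<in> tau z j" shows "(Q j has_real_derivative Qd j x) (at x)"
proof -
  have x: "x \<in> {z (j - 1)..z j}" using assms(2) by (auto simp: tau_def)
  have "(Q j has_real_derivative
     A.TGd j x * (C.TG j x)\<^sup>2 * (G j x + AA j) + A.TG j x * (2 * C.TG j x * C.TGd j x) * (G j x + AA j)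
      + A.TG j x * (C.TG j x)\<^sup>2 * gi j x) (at x)"
    unfolding Q_def[abs_def]
    by (rule derivative_eq_intros A.TG_der[OF assms] C.TG_der[OF assms] G_der[OF assms] | simp add: algebra_simps)+
  moreover have one: "A.TG j x * (C.TG j x)\<^sup>2 * gi j x = 1"
    unfolding gi_def using F_pos[OF assms(1) x] C_pos[OF assms(1) x] by simp
  moreover have "A.TGd j x * (C.TG j x)\<^sup>2 * (G j x + AA j) + A.TG j x * (2 * C.TG j x * C.TGd j x) * (G j x + AA j)
      + A.TG j x * (C.TG j x)\<^sup>2 * gi j x = Qd j x"
    unfolding Qd_def one by algebra
  ultimately show ?thesis by simp
qed

lemma Qd_pos: assumes "j \<in> {1..N}" "x \<in> tau z j" shows "Qd j x > 0"
proof -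
  have x: "x \<in> {z (j - 1)..z j}" using assms(2) by (auto simp: tau_def)
  have "0 \<le> A.TGd j x * (C.TG j x)\<^sup>2 + 2 * A.TG j x * C.TG j x * C.TGd j x"
    using A.TGd_nonneg[OF assms] C.TGd_nonneg[OF assms] F_pos[OF assms(1) x] C_pos[OF assms(1) x] by simp
  moreover have "0 \<le> G j x + AA j" using G_nonneg[OF assms(1) x] AA_nonneg[OF assms(1)] by simp
  ultimately have "0 \<le> (A.TGd j x * (C.TG j x)\<^sup>2 + 2 * A.TG j x * C.TG j x * C.TGd j x) * (G j x + AA j)"
    by (rule mult_nonneg_nonneg)
  then show ?thesis unfolding Qd_def by linarith
qed

lemma Q_cont: assumes "j \<in> {1..N}" shows "continuous_on {z (j - 1)..z j} (Q j)"
  unfolding Q_def[abs_def] using A.TG_cont[OF assms] C.TG_cont[OF assms] G_cont[OF assms]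
  by (intro continuous_intros) auto

lemma Q_incr: assumes "j \<in> {1..N}" "x \<in> {z (j - 1)..z j}" "y \<in> {z (j - 1)..z j}" "x < y"
  shows "Q j x < Q j y"
proof (rule DERIV_pos_imp_increasing_open[OF assms(4)])
  fix t assume "x < t" "t < y"
  then have "t \<in> tau z j" using assms by (auto simp: tau_def)
  then show "\<exists>D. (Q j has_real_derivative D) (at t) \<and> 0 < D"
    using Q_der[OF assms(1)] Qd_pos[OF assms(1)] by blast
next
  show "continuous_on {x..y} (Q j)" using assms by (intro continuous_on_subset[OF Q_cont[OF assms(1)]]) auto
qed

end




context two begin

lemma tau_sub: "x \<in> tau z j \<Longrightarrow> x \<in> {z (j - 1)..z j}"
  by (auto simp: tau_def)

lemma Ahh_pos: "j \<in> {1..N} \<Longrightarrow> x \<in> {z (j - 1)..z j} \<Longrightarrow> A.hh j x > 0"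
  using A.hh_lb A.gpos by fastforce
lemma Chh_pos: "j \<in> {1..N} \<Longrightarrow> x \<in> {z (j - 1)..z j} \<Longrightarrow> C.hh j x > 0"
  using C.hh_lb C.gpos by fastforce

lemma der_a: assumes j: "j \<in> {1..N}" and x: "x \<in> tau z j"
  shows "\<exists>D. ((\<lambda>y. qfun a c z N y / a y) has_real_derivative D) (at x) \<and> D \<ge> 1 / a x"
proof -
  have xc: "x \<in> {z (j - 1)..z j}" using x by (rule tau_sub)
  define F where "F = A.TG j x"
  define Fd where "Fd = A.TGd j x"
  define Cv where "Cv = C.TG j x"
  define Cd where "Cd = C.TGd j x"
  define H where "H = A.hh j x"
  define Hd where "Hd = A.hd j x"
  define S where "S = G j x + AA j"
  have Fp: "F > 0" using F_pos[OF j xc] F_def by simp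
  have Cp: "Cv > 0" using C_pos[OF j xc] Cv_def by simp
  have Hp: "H > 0" using Ahh_pos[OF j xc] H_def by simp
  have Cdn: "Cd \<ge> 0" using C.TGd_nonneg[OF j x] Cd_def by simp
  have Sn: "S \<ge> 0" using G_nonneg[OF j xc] AA_nonneg[OF j] S_def by simp
  have K: "(Fd * Cv^2 + 2 * F * Cv * Cd) * H - F * Cv^2 * Hd \<ge> 0"
  proof (cases "A.inc j")
    case True
    then have e: "F = H" "Fd = Hd" unfolding F_def H_def Fd_def Hd_def A.TG_def A.TGd_def by auto
    have "(Fd * Cv^2 + 2 * F * Cv * Cd) * H - F * Cv^2 * Hd = 2 * H * H * Cv * Cd" unfolding e by algebra
    then show ?thesis using Hp Cp Cdn by simp
  next
    case False
    then have "Fd = 0" "Hd \<le> 0" using A.not_inc[OF j False x] unfolding Fd_def Hd_def A.TGd_def by auto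
    moreover have "0 \<le> 2 * F * Cv * Cd * H" using Fp Cp Cdn Hp by simp
    moreover have "F * Cv^2 * Hd \<le> 0" using Fp Cp \<open>Hd \<le> 0\<close> by (simp add: mult_nonneg_nonpos)
    moreover have "(Fd * Cv^2 + 2 * F * Cv * Cd) * H - F * Cv^2 * Hd = 2 * F * Cv * Cd * H - F * Cv^2 * Hd"
      using \<open>Fd = 0\<close> by (simp add: algebra_simps)
    ultimately show ?thesis by linarith
  qed
  have "Qd j x * A.hh j x - Q j x * A.hd j x \<ge> A.hh j x"
    using key_ineq[OF K Sn] unfolding Qd_def Q_def F_def Fd_def Cv_def Cd_def H_def Hd_def S_def
    by (simp add: mult.assoc)
  from quot_der[OF Q_der[OF j x] A.hh_der[OF j x] Ahh_pos[OF j xc] this]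
  obtain D where D: "((\<lambda>y. Q j y / A.hh j y) has_real_derivative D) (at x)" "D \<ge> 1 / A.hh j x" by blast
  have "((\<lambda>y. qfun a c z N y / a y) has_real_derivative D) (at x)"
    by (rule has_field_derivative_transform_within_open[OF D(1) _ x])
       (auto simp: tau_def q_eq[OF j] A.g_eq[OF j])
  moreover have "1 / a x = 1 / A.hh j x" using A.g_eq[OF j x] by simp
  ultimately show ?thesis using D(2) by auto
qed

lemma der_c: assumes j: "j \<in> {1..N}" and x: "x \<in> tau z j"
  shows "\<exists>D. ((\<lambda>y. qfun a c z N y / (c y)\<^sup>2) has_real_derivative D) (at x) \<and> D \<ge> 1 / (c x)\<^sup>2"
proof -
  have xc: "x \<in> {z (j - 1)..z j}" using x by (rule tau_sub)
  define F where "F = A.TG j x"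
  define Fd where "Fd = A.TGd j x"
  define Cv where "Cv = C.TG j x"
  define Cd where "Cd = C.TGd j x"
  define H where "H = (C.hh j x)\<^sup>2"
  define Hd where "Hd = 2 * C.hh j x * C.hd j x"
  define S where "S = G j x + AA j"
  have Fp: "F > 0" using F_pos[OF j xc] F_def by simp
  have Cp: "Cv > 0" using C_pos[OF j xc] Cv_def by simp
  have hp: "C.hh j x > 0" using Chh_pos[OF j xc] by simp
  have Hp: "H > 0" using hp H_def by simp
  have Fdn: "Fd \<ge> 0" using A.TGd_nonneg[OF j x] Fd_def by simp
  have Sn: "S \<ge> 0" using G_nonneg[OF j xc] AA_nonneg[OF j] S_def by simp
  have K: "(Fd * Cv^2 + 2 * F * Cv * Cd) * H - F * Cv^2 * Hd \<ge> 0"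
  proof (cases "C.inc j")
    case True
    then have e: "Cv = C.hh j x" "Cd = C.hd j x" unfolding Cv_def Cd_def C.TG_def C.TGd_def by auto
    have "(Fd * Cv^2 + 2 * F * Cv * Cd) * H - F * Cv^2 * Hd = Fd * Cv^4"
      unfolding H_def Hd_def e by algebra
    then show ?thesis using Fdn Cp by simp
  next
    case False
    then have "Cd = 0" "C.hd j x \<le> 0" using C.not_inc[OF j False x] unfolding Cd_def C.TGd_def by auto
    then have "Hd \<le> 0" unfolding Hd_def using hp by (simp add: mult_nonneg_nonpos)
    moreover have "0 \<le> Fd * Cv^2 * H" using Fdn Hp by simp
    moreover have "F * Cv^2 * Hd \<le> 0" using Fp Cp \<open>Hd \<le> 0\<close> by (simp add: mult_nonneg_nonpos)
    ultimately show ?thesis using \<open>Cd = 0\<close> by simp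
  qed
  have "Qd j x * (C.hh j x)\<^sup>2 - Q j x * Hd \<ge> (C.hh j x)\<^sup>2"
    using key_ineq[OF K Sn] unfolding Qd_def Q_def F_def Fd_def Cv_def Cd_def H_def S_def
    by (simp add: mult.assoc)
  moreover have "((\<lambda>y. (C.hh j y)\<^sup>2) has_real_derivative Hd) (at x)"
    unfolding Hd_def by (rule derivative_eq_intros C.hh_der[OF j x] | simp)+
  ultimately obtain D where D: "((\<lambda>y. Q j y / (C.hh j y)\<^sup>2) has_real_derivative D) (at x)"
      "D \<ge> 1 / (C.hh j x)\<^sup>2"
    using quot_der[OF Q_der[OF j x], of "\<lambda>y. (C.hh j y)\<^sup>2" Hd] hp by auto
  have "((\<lambda>y. qfun a c z N y / (c y)\<^sup>2) has_real_derivative D) (at x)"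
    by (rule has_field_derivative_transform_within_open[OF D(1) _ x])
       (auto simp: tau_def q_eq[OF j] C.g_eq[OF j])
  moreover have "1 / (c x)\<^sup>2 = 1 / (C.hh j x)\<^sup>2" using C.g_eq[OF j x] by simp
  ultimately show ?thesis using D(2) by auto
qed

end




context two begin

lemma qa_cont: assumes j: "j \<in> {1..N}" shows "continuous_on {z (j - 1)..z j} (\<lambda>y. Q j y / A.hh j y)"
  using Q_cont[OF j] A.hh_cont[OF j] Ahh_pos[OF j] by (intro continuous_intros) force+

lemma qc_cont: assumes j: "j \<in> {1..N}" shows "continuous_on {z (j - 1)..z j} (\<lambda>y. Q j y / (C.hh j y)\<^sup>2)"
  using Q_cont[OF j] C.hh_cont[OF j] Chh_pos[OF j] by (intro continuous_intros) force+

lemma qa_left: assumes j: "j \<in> {1..N}"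
  shows "((\<lambda>y. qfun a c z N y / a y) \<longlongrightarrow> Q j (z j) / A.hh j (z j)) (at_left (z j))"
  using lim_left_piece[OF A.st[OF j] qa_cont[OF j], of "\<lambda>y. qfun a c z N y / a y"]
  by (auto simp: q_eq[OF j] A.g_eq[OF j] tau_def)

lemma qa_right: assumes j: "j \<in> {1..N}"
  shows "((\<lambda>y. qfun a c z N y / a y) \<longlongrightarrow> Q j (z (j - 1)) / A.hh j (z (j - 1))) (at_right (z (j - 1)))"
  using lim_right_piece[OF A.st[OF j] qa_cont[OF j], of "\<lambda>y. qfun a c z N y / a y"]
  by (auto simp: q_eq[OF j] A.g_eq[OF j] tau_def)

lemma qc_left: assumes j: "j \<in> {1..N}"
  shows "((\<lambda>y. qfun a c z N y / (c y)\<^sup>2) \<longlongrightarrow> Q j (z j) / (C.hh j (z j))\<^sup>2) (at_left (z j))"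
  using lim_left_piece[OF A.st[OF j] qc_cont[OF j], of "\<lambda>y. qfun a c z N y / (c y)\<^sup>2"]
  by (auto simp: q_eq[OF j] C.g_eq[OF j] tau_def)

lemma qc_right: assumes j: "j \<in> {1..N}"
  shows "((\<lambda>y. qfun a c z N y / (c y)\<^sup>2) \<longlongrightarrow> Q j (z (j - 1)) / (C.hh j (z (j - 1)))\<^sup>2) (at_right (z (j - 1)))"
  using lim_right_piece[OF A.st[OF j] qc_cont[OF j], of "\<lambda>y. qfun a c z N y / (c y)\<^sup>2"]
  by (auto simp: q_eq[OF j] C.g_eq[OF j] tau_def)

lemma q_right: assumes j: "j \<in> {1..N}"
  shows "(qfun a c z N \<longlongrightarrow> Q j (z (j - 1))) (at_right (z (j - 1)))"
  using lim_right_piece[OF A.st[OF j] Q_cont[OF j], of "qfun a c z N"]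
  by (auto simp: q_eq[OF j] tau_def)

lemma jump: assumes m: "1 \<le> m" "m < N"
  shows "Q m (z m) \<le> Q (Suc m) (z m)"
    "Q m (z m) / A.hh m (z m) \<le> Q (Suc m) (z m) / A.hh (Suc m) (z m)"
    "Q m (z m) / (C.hh m (z m))\<^sup>2 \<le> Q (Suc m) (z m) / (C.hh (Suc m) (z m))\<^sup>2"
proof -
  have jm: "m \<in> {1..N}" and jm1: "Suc m \<in> {1..N}" using m by auto
  have zm: "z m \<in> {z (m - 1)..z m}" using A.st[OF jm] by auto
  have zm1: "z m \<in> {z (Suc m - 1)..z (Suc m)}" using A.st[OF jm1] by auto
  define u where "u = A.TG m (z m)"
  define u' where "u' = A.TG (Suc m) (z m)"
  define v where "v = (C.TG m (z m))\<^sup>2"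
  define v' where "v' = (C.TG (Suc m) (z m))\<^sup>2"
  define p where "p = A.hh m (z m)"
  define p' where "p' = A.hh (Suc m) (z m)"
  define w where "w = (C.hh m (z m))\<^sup>2"
  define w' where "w' = (C.hh (Suc m) (z m))\<^sup>2"
  define S where "S = G m (z m) + AA m"
  have pos: "u > 0" "u' > 0" "v > 0" "v' > 0" "p > 0" "p' > 0" "w > 0" "w' > 0" "S \<ge> 0"
    using F_pos[OF jm zm] F_pos[OF jm1 zm1] C_pos[OF jm zm] C_pos[OF jm1 zm1]
      Ahh_pos[OF jm zm] Ahh_pos[OF jm1 zm1] Chh_pos[OF jm zm] Chh_pos[OF jm1 zm1]
      G_nonneg[OF jm zm] AA_nonneg[OF jm]
    unfolding u_def u'_def v_def v'_def p_def p'_def w_def w'_def S_def by auto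
  have l1: "llim (tilde a z N) (z m) = u" unfolding llim_def u_def
    by (rule tendsto_Lim[OF trivial_limit_at_left_real A.tilde_left[OF jm]])
  have r1: "rlim (tilde a z N) (z m) = u'" unfolding rlim_def u'_def
    using tendsto_Lim[OF trivial_limit_at_right_real A.tilde_right[OF jm1]] by simp
  have l2: "llim (\<lambda>x. (tilde c z N x)\<^sup>2) (z m) = v" unfolding llim_def v_def
    by (rule tendsto_Lim[OF trivial_limit_at_left_real tendsto_power[OF C.tilde_left[OF jm]]])
  have r2: "rlim (\<lambda>x. (tilde c z N x)\<^sup>2) (z m) = v'" unfolding rlim_def v'_def
    using tendsto_Lim[OF trivial_limit_at_right_real tendsto_power[OF C.tilde_right[OF jm1]]] by simp
  have l3: "llim a (z m) = p" unfolding p_def by (rule A.llim_g[OF jm])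
  have r3: "rlim a (z m) = p'" unfolding p'_def using A.rlim_g[OF jm1] by simp
  have l4: "llim (\<lambda>x. (c x)\<^sup>2) (z m) = w" unfolding llim_def w_def
    by (rule tendsto_Lim[OF trivial_limit_at_left_real tendsto_power[OF C.g_left[OF jm]]])
  have r4: "rlim (\<lambda>x. (c x)\<^sup>2) (z m) = w'" unfolding rlim_def w'_def
    using tendsto_Lim[OF trivial_limit_at_right_real tendsto_power[OF C.g_right[OF jm1]]] by simp
  have Iac: "Iac a c z N (z (m - 1)) (z m) = G m (z m)"
    using Iac_eq[OF jm, of "z m"] A.st[OF jm] by simp
  have msuc: "m = Suc (m - 1)" using m by simp
  have AA1: "AA (Suc m) = max (u / u') 1 * max (v / v') 1 * max (max (p' / p) (w' / w)) 1 * S"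
  proof -
    have "AA (Suc m) = Aseq a c z N (Suc (m - 1))" unfolding AA_def Acoef_def using msuc by simp
    also have "\<dots> = alpha_c a z N m * sigma_c c z N m * gamma_c a c z m * (Iac a c z N (z (m - 1)) (z m) + Aseq a c z N (m - 1))"
      using msuc by (metis Aseq.simps(2))
    also have "\<dots> = max (u / u') 1 * max (v / v') 1 * max (max (p' / p) (w' / w)) 1 * S"
      unfolding alpha_c_def sigma_c_def gamma_c_def l1 r1 l2 r2 l3 r3 l4 r4 Iac S_def AA_def Acoef_def
      by simp
    finally show ?thesis .
  qed
  have Qm: "Q m (z m) = u * v * S" unfolding Q_def u_def v_def S_def by simp
  have Qm1: "Q (Suc m) (z m) = u' * v' * (max (u / u') 1 * max (v / v') 1 * max (max (p' / p) (w' / w)) 1 * S)"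
  proof -
    have "Q (Suc m) (z m) = u' * v' * AA (Suc m)" unfolding Q_def u'_def v'_def using G_0[of "Suc m"] by simp
    then show ?thesis unfolding AA1 .
  qed
  note J = jump_ineq[OF pos]
  show "Q m (z m) \<le> Q (Suc m) (z m)" unfolding Qm Qm1 using J(1) by simp
  show "Q m (z m) / A.hh m (z m) \<le> Q (Suc m) (z m) / A.hh (Suc m) (z m)"
    unfolding Qm Qm1 p_def[symmetric] p'_def[symmetric] using J(2) by simp
  show "Q m (z m) / (C.hh m (z m))\<^sup>2 \<le> Q (Suc m) (z m) / (C.hh (Suc m) (z m))\<^sup>2"
    unfolding Qm Qm1 w_def[symmetric] w'_def[symmetric] using J(3) by simp
qed

lemma Q_le: assumes j: "j \<in> {1..N}" shows "Q j (z (j - 1)) \<le> Q j (z j)"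
  using Q_incr[OF j, of "z (j - 1)" "z j"] A.st[OF j] by auto

lemma chain: assumes i: "i \<in> {1..N}" shows "i < k \<Longrightarrow> k \<le> N \<Longrightarrow> Q i (z i) \<le> Q k (z (k - 1))"
proof (induction k)
  case 0 then show ?case by simp
next
  case (Suc k)
  show ?case
  proof (cases "k = i")
    case True
    then show ?thesis using jump(1)[of i] i Suc.prems by auto
  next
    case False
    then have ik: "i < k" using Suc.prems by simp
    have kN: "k \<in> {1..N}" using ik i Suc.prems by auto
    have "Q i (z i) \<le> Q k (z (k - 1))" using Suc.IH ik Suc.prems by simp
    also have "\<dots> \<le> Q k (z k)" by (rule Q_le[OF kN])
    also have "\<dots> \<le> Q (Suc k) (z k)" using jump(1)[of k] kN Suc.prems by auto
    finally show ?thesis by simp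
  qed
qed

end


theorem lemma5p9:
  fixes L amin amax cmin cmax :: real and a c :: "real \<Rightarrow> real"
    and z :: "nat \<Rightarrow> real" and N :: nat
  assumes L: "L > 0"
    and pos: "amin > 0" "cmin > 0"
    and abnd: "\<forall>x\<in>{-L..L}. amin \<le> a x \<and> a x \<le> amax"
    and cbnd: "\<forall>x\<in>{-L..L}. cmin \<le> c x \<and> c x \<le> cmax"
    and z0: "z 0 = -L" and zN: "z N = L"
    and zinc: "\<forall>j\<in>{1..N}. z (j - 1) < z j"
    and aC1: "\<forall>j\<in>{1..N}. C1_piece a (z (j - 1)) (z j) \<and> sign_piece a (z (j - 1)) (z j)"
    and cC1: "\<forall>j\<in>{1..N}. C1_piece c (z (j - 1)) (z j) \<and> sign_piece c (z (j - 1)) (z j)"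
  defines "q \<equiv> qfun a c z N"
  shows "(\<forall>x\<in>(\<Union>j\<in>{1..N}. tau z j). \<forall>y\<in>(\<Union>j\<in>{1..N}. tau z j). x < y \<longrightarrow> q x < q y)
    \<and> (q \<longlongrightarrow> 0) (at_right (-L))
    \<and> (\<forall>j\<in>{1..N}. \<forall>x\<in>tau z j.
          (\<exists>D. ((\<lambda>y. q y / a y) has_real_derivative D) (at x) \<and> D \<ge> 1 / a x)
        \<and> (\<exists>D. ((\<lambda>y. q y / (c y)\<^sup>2) has_real_derivative D) (at x) \<and> D \<ge> 1 / (c x)\<^sup>2))
    \<and> (\<forall>j\<in>{1..N - 1}.
          (\<exists>l r. ((\<lambda>y. q y / a y) \<longlongrightarrow> l) (at_left (z j))
               \<and> ((\<lambda>y. q y / a y) \<longlongrightarrow> r) (at_right (z j)) \<and> l - r \<le> 0)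
        \<and> (\<exists>l r. ((\<lambda>y. q y / (c y)\<^sup>2) \<longlongrightarrow> l) (at_left (z j))
               \<and> ((\<lambda>y. q y / (c y)\<^sup>2) \<longlongrightarrow> r) (at_right (z j)) \<and> l - r \<le> 0))"
proof -
  interpret two a c z N amin cmin L
    by unfold_locales (use assms in auto)
  have N1: "N \<ge> 1" using z0 zN L by (cases N) auto
  have mono: "\<forall>x\<in>(\<Union>j\<in>{1..N}. tau z j). \<forall>y\<in>(\<Union>j\<in>{1..N}. tau z j). x < y \<longrightarrow> q x < q y"
  proof (intro ballI impI)
    fix x y assume "x \<in> (\<Union>j\<in>{1..N}. tau z j)" "y \<in> (\<Union>j\<in>{1..N}. tau z j)" and xy: "x < y"
    then obtain i k where i: "i \<in> {1..N}" "x \<in> tau z i" and k: "k \<in> {1..N}" "y \<in> tau z k" by blast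
    have qx: "q x = Q i x" unfolding q_def by (rule q_eq[OF i])
    have qy: "q y = Q k y" unfolding q_def by (rule q_eq[OF k])
    consider "i = k" | "i < k" | "k < i" by linarith
    then show "q x < q y"
    proof cases
      case 1
      then show ?thesis unfolding qx qy using Q_incr[OF k(1) _ tau_sub[OF k(2)] xy] tau_sub[OF i(2)] by simp
    next
      case 2
      have "Q i x < Q i (z i)" using Q_incr[OF i(1) tau_sub[OF i(2)], of "z i"] A.st[OF i(1)] i(2)
        by (auto simp: tau_def)
      also have "\<dots> \<le> Q k (z (k - 1))" using chain[OF i(1) 2] k(1) by simp
      also have "\<dots> < Q k y" using Q_incr[OF k(1) _ tau_sub[OF k(2)], of "z (k - 1)"] A.st[OF k(1)] k(2)
        by (auto simp: tau_def)
      finally show ?thesis unfolding qx qy .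
    next
      case 3
      have "z k \<le> z (i - 1)" using 3 i(1) by (intro z_mono[OF zinc]) auto
      then show ?thesis using i(2) k(2) xy by (auto simp: tau_def)
    qed
  qed
  have lim: "(q \<longlongrightarrow> 0) (at_right (-L))"
  proof -
    have j1: "1 \<in> {1..N}" using N1 by simp
    have "Q 1 (z 0) = 0" unfolding Q_def AA_def Acoef_def using G_0[of 1] by simp
    then show ?thesis using q_right[OF j1] z0 unfolding q_def by simp
  qed
  have der: "\<forall>j\<in>{1..N}. \<forall>x\<in>tau z j.
          (\<exists>D. ((\<lambda>y. q y / a y) has_real_derivative D) (at x) \<and> D \<ge> 1 / a x)
        \<and> (\<exists>D. ((\<lambda>y. q y / (c y)\<^sup>2) has_real_derivative D) (at x) \<and> D \<ge> 1 / (c x)\<^sup>2)"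
    unfolding q_def using der_a der_c by blast
  have jmp: "\<forall>j\<in>{1..N - 1}.
          (\<exists>l r. ((\<lambda>y. q y / a y) \<longlongrightarrow> l) (at_left (z j))
               \<and> ((\<lambda>y. q y / a y) \<longlongrightarrow> r) (at_right (z j)) \<and> l - r \<le> 0)
        \<and> (\<exists>l r. ((\<lambda>y. q y / (c y)\<^sup>2) \<longlongrightarrow> l) (at_left (z j))
               \<and> ((\<lambda>y. q y / (c y)\<^sup>2) \<longlongrightarrow> r) (at_right (z j)) \<and> l - r \<le> 0)"
  proof
    fix j assume j: "j \<in> {1..N - 1}"
    then have jj: "j \<in> {1..N}" "Suc j \<in> {1..N}" "1 \<le> j" "j < N" by auto
    show "(\<exists>l r. ((\<lambda>y. q y / a y) \<longlongrightarrow> l) (at_left (z j))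
               \<and> ((\<lambda>y. q y / a y) \<longlongrightarrow> r) (at_right (z j)) \<and> l - r \<le> 0)
        \<and> (\<exists>l r. ((\<lambda>y. q y / (c y)\<^sup>2) \<longlongrightarrow> l) (at_left (z j))
               \<and> ((\<lambda>y. q y / (c y)\<^sup>2) \<longlongrightarrow> r) (at_right (z j)) \<and> l - r \<le> 0)"
    proof (intro conjI exI)
      show "((\<lambda>y. q y / a y) \<longlongrightarrow> Q j (z j) / A.hh j (z j)) (at_left (z j))"
        unfolding q_def by (rule qa_left[OF jj(1)])
      show "((\<lambda>y. q y / a y) \<longlongrightarrow> Q (Suc j) (z j) / A.hh (Suc j) (z j)) (at_right (z j))"
        unfolding q_def using qa_right[OF jj(2)] by simp
      show "Q j (z j) / A.hh j (z j) - Q (Suc j) (z j) / A.hh (Suc j) (z j) \<le> 0"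
        using jump(2)[OF jj(3,4)] by simp
      show "((\<lambda>y. q y / (c y)\<^sup>2) \<longlongrightarrow> Q j (z j) / (C.hh j (z j))\<^sup>2) (at_left (z j))"
        unfolding q_def by (rule qc_left[OF jj(1)])
      show "((\<lambda>y. q y / (c y)\<^sup>2) \<longlongrightarrow> Q (Suc j) (z j) / (C.hh (Suc j) (z j))\<^sup>2) (at_right (z j))"
        unfolding q_def using qc_right[OF jj(2)] by simp
      show "Q j (z j) / (C.hh j (z j))\<^sup>2 - Q (Suc j) (z j) / (C.hh (Suc j) (z j))\<^sup>2 \<le> 0"
        using jump(3)[OF jj(3,4)] by simp
    qed
  qed
  show ?thesis using mono lim der jmp by blast
qed

end
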